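(* The multiplicative extension of $B^-$ is a Hopf algebra epimorphism $B^-:\mathcal N_{\mathcal A}\twoheadrightarrow\mathcal H_{CK}$.
   Context: $\mathcal N_{\mathcal A}$ is the natural Hopf algebra of the operad of rooted trees. As an algebra it is the polynomial algebra on generators $t_{\tau(T)}$, one per isomorphism type of rooted tree, with the one-vertex tree equal to $1$. Its coproduct is multiplicative with $\Delta(t_{\tau(T)})=\sum_b t_{\tau(a_b(2))}\otimes t_{\tau(T_b(1))}$. The sum is over all colorings $b$ of the edges of $T$ by $\{1,2\}$ such that the edges of color $1$ form a subtree containing the root (possibly just the root). $T_b(1)$ is the rooted tree obtained by contracting each connected component of the color-$2$ edges (and each vertex not incident to any color-$2$ edge) to a single vertex, i.e. the tree of color-$1$ edges on these blocks. $a_b(2)$ is the forest of rooted trees formed by the color-$2$ components (with singleton trees contributing $1$). $\mathcal H_{CK}$ is the Connes–Kreimer Hopf algebra: the polynomial algebra on generators $t_{\tau(T)}$ for unlabelled rooted trees $T$, with the empty tree equal to $1$. Its coproduct is multiplicative with $\Delta_{CK}(t_{\tau(T)})=\sum_{b_v}t_{\tau(a_{b_v}(2))}\otimes t_{\tau(T_{b_v}(1))}$. The sum is over all colorings $b_v$ of the vertices of $T$ by $\{1,2\}$ such that the vertices of color $1$ induce a rooted subtree containing the root, or the empty set. $T_{b_v}(1)$ is that subtree, and $a_{b_v}(2)$ is the forest induced by the color-$2$ vertices, with $t$ of a forest the product over its trees. $B^-(t_{\tau(T)})=\prod_{j=1}^kt_{\tau(T_j)}$, where $T_1,\dots,T_k$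 are the subtrees of $T$ rooted at the children of the root. In particular, $B^-$ of the one-vertex tree is $1$. *)

theory Defs
  imports "HOL-Library.Multiset" "HOL-Library.Poly_Mapping" "HOL-Library.Product_Plus"
begin

text \<open>Isomorphism types of (unordered, unlabelled) rooted trees: a tree is the multiset
  of the subtrees rooted at the children of its root.\<close>
datatype rtree = Node (children: "rtree multiset")

abbreviation leaf :: rtree where "leaf \<equiv> Node {#}"

text \<open>Concrete plane trees, used as representatives so that colorings of edges / vertices
  are counted with the correct multiplicity.\<close>
datatype ptree = PNode "ptree list"

fun ptp :: "ptree \<Rightarrow> rtree" where
  "ptp (PNode xs) = Node (mset (map ptp xs))"

definition rep :: "rtree \<Rightarrow> ptree" where
  "rep T = (SOME P. ptp P = T)"

datatype col = C1 | C2

text \<open>The polynomial algebra over a field on generators indexed by trees: monomials are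
  multisets of trees, polynomials are finitely supported coefficient functions with
  convolution product.  The tensor square of such an algebra is the polynomial algebra
  whose monomials are pairs of monomials.\<close>
type_synonym 'k palg = "rtree multiset \<Rightarrow>\<^sub>0 'k"
type_synonym 'k palg2 = "(rtree multiset \<times> rtree multiset) \<Rightarrow>\<^sub>0 'k"

definition linext :: "('a \<Rightarrow> 'b) \<Rightarrow> ('a \<Rightarrow>\<^sub>0 'k::comm_ring_1) \<Rightarrow> ('b \<Rightarrow>\<^sub>0 'k)" where
  "linext f p = (\<Sum>m\<in>Poly_Mapping.keys p. Poly_Mapping.single (f m) (Poly_Mapping.lookup p m))"

text \<open>N_A: the one-vertex tree is identified with 1, so the monomials are multisets of
  trees with at least one edge.\<close>
definition NA :: "'k::field palg set" where
  "NA = {p. \<forall>m\<in>Poly_Mapping.keys p. leaf \<notin># m}"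

definition genNA :: "rtree \<Rightarrow> rtree multiset" where
  "genNA T = (if T = leaf then {#} else {#T#})"

text \<open>Edge-colored plane trees: each child is paired with the color of the edge to it.\<close>
datatype ctree = CNode "(col \<times> ctree) list"

fun cplane :: "ctree \<Rightarrow> ptree" where
  "cplane (CNode xs) = PNode (map (\<lambda>p. cplane (snd p)) xs)"

fun all2 :: "ctree \<Rightarrow> bool" where
  "all2 (CNode xs) = (\<forall>p\<in>set xs. fst p = C2 \<and> all2 (snd p))"

text \<open>Edges of color 1 form a subtree containing the root: every color-1 edge hangs
  below color-1 edges only (equivalently no color-1 edge lies below a color-2 edge).\<close>
fun evalid :: "ctree \<Rightarrow> bool" where
  "evalid (CNode xs) =
     (\<forall>p\<in>set xs. (fst p = C1 \<longrightarrow> evalid (snd p)) \<and> (fst p = C2 \<longrightarrow> all2 (snd p)))"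

text \<open>The connected component of color-2 edges containing the root, as a rooted tree.\<close>
fun comp2 :: "ctree \<Rightarrow> rtree" where
  "comp2 (CNode xs) =
     Node (sum_list (map (\<lambda>p. if fst p = C2 then {#comp2 (snd p)#} else {#}) xs))"

text \<open>Children (in the contracted tree) of the block containing the root: the color-1
  edges leaving the root's color-2 component, each with its contracted subtree.\<close>
fun qch :: "ctree \<Rightarrow> rtree multiset" where
  "qch (CNode xs) =
     sum_list (map (\<lambda>p. if fst p = C1 then {#Node (qch (snd p))#} else qch (snd p)) xs)"

text \<open>T_b(1): contract every color-2 component (and isolated vertex) to a vertex.\<close>
definition contr :: "ctree \<Rightarrow> rtree" where
  "contr c = Node (qch c)"

text \<open>Color-2 components other than the root one (those whose top vertex is entered via
  a color-1 edge).\<close>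
fun fch :: "ctree \<Rightarrow> rtree multiset" where
  "fch (CNode xs) =
     sum_list (map (\<lambda>p. if fst p = C1 then {#comp2 (snd p)#} + fch (snd p) else fch (snd p)) xs)"

text \<open>a_b(2): the forest of all color-2 components.\<close>
definition forest2 :: "ctree \<Rightarrow> rtree multiset" where
  "forest2 c = {#comp2 c#} + fch c"

definition forestNA :: "rtree multiset \<Rightarrow> rtree multiset" where
  "forestNA F = filter_mset (\<lambda>T. T \<noteq> leaf) F"

definition DeltaNA_gen :: "rtree \<Rightarrow> 'k::field palg2" where
  "DeltaNA_gen T =
     (\<Sum>c\<in>{c. cplane c = rep T \<and> evalid c}.
        Poly_Mapping.single (forestNA (forest2 c), genNA (contr c)) 1)"

definition DeltaNA :: "'k::field palg \<Rightarrow> 'k palg2" where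
  "DeltaNA p = (\<Sum>m\<in>Poly_Mapping.keys p. Poly_Mapping.single 0 (Poly_Mapping.lookup p m) * prod_mset (image_mset DeltaNA_gen m))"

definition epsilon :: "'k::field palg \<Rightarrow> 'k" where
  "epsilon p = Poly_Mapping.lookup p {#}"

datatype vtree = VNode col "vtree list"

fun vcol :: "vtree \<Rightarrow> col" where
  "vcol (VNode k xs) = k"

fun vplane :: "vtree \<Rightarrow> ptree" where
  "vplane (VNode k xs) = PNode (map vplane xs)"

fun vall2 :: "vtree \<Rightarrow> bool" where
  "vall2 (VNode k xs) = (k = C2 \<and> (\<forall>d\<in>set xs. vall2 d))"

fun upclosed :: "vtree \<Rightarrow> bool" where
  "upclosed (VNode k xs) = (\<forall>d\<in>set xs. (vcol d = C1 \<longrightarrow> k = C1) \<and> upclosed d)"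

text \<open>Color-1 vertices induce a rooted subtree containing the root, or the empty set.\<close>
definition vvalid :: "vtree \<Rightarrow> bool" where
  "vvalid v = (vall2 v \<or> (vcol v = C1 \<and> upclosed v))"

text \<open>The subtree induced by color-1 vertices below (and including) a color-1 vertex.\<close>
fun sub1 :: "vtree \<Rightarrow> rtree" where
  "sub1 (VNode k xs) =
     Node (sum_list (map (\<lambda>d. if vcol d = C1 then {#sub1 d#} else {#}) xs))"

text \<open>The component of color-2 vertices topped at a color-2 vertex.\<close>
fun vcomp2 :: "vtree \<Rightarrow> rtree" where
  "vcomp2 (VNode k xs) =
     Node (sum_list (map (\<lambda>d. if vcol d = C2 then {#vcomp2 d#} else {#}) xs))"

text \<open>Forest induced by color-2 vertices; the flag says whether the parent has color 2.\<close>
fun vforest2 :: "bool \<Rightarrow> vtree \<Rightarrow> rtree multiset" where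
  "vforest2 b (VNode k xs) =
     (if k = C2 \<and> \<not> b then {#vcomp2 (VNode k xs)#} else {#}) +
     sum_list (map (vforest2 (k = C2)) xs)"

text \<open>Monomial of T_{b_v}(1): the empty tree is 1.\<close>
definition vsub1 :: "vtree \<Rightarrow> rtree multiset" where
  "vsub1 v = (if vcol v = C1 then {#sub1 v#} else {#})"

definition DeltaCK_gen :: "rtree \<Rightarrow> 'k::field palg2" where
  "DeltaCK_gen T =
     (\<Sum>v\<in>{v. vplane v = rep T \<and> vvalid v}.
        Poly_Mapping.single (vforest2 False v, vsub1 v) 1)"

definition DeltaCK :: "'k::field palg \<Rightarrow> 'k palg2" where
  "DeltaCK p = (\<Sum>m\<in>Poly_Mapping.keys p. Poly_Mapping.single 0 (Poly_Mapping.lookup p m) * prod_mset (image_mset DeltaCK_gen m))"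

text \<open>B^- on monomials: t_T \<mapsto> product of t over the children subtrees of the root.\<close>
definition Bminus_mon :: "rtree multiset \<Rightarrow> rtree multiset" where
  "Bminus_mon m = sum_mset (image_mset children m)"

definition Bminus :: "'k::field palg \<Rightarrow> 'k palg" where
  "Bminus p = linext Bminus_mon p"

definition Bminus2 :: "'k::field palg2 \<Rightarrow> 'k palg2" where
  "Bminus2 q = linext (\<lambda>(m1, m2). (Bminus_mon m1, Bminus_mon m2)) q"

end

theory Submission
  imports Defs
begin


abbreviation "sng \<equiv> Poly_Mapping.single"
abbreviation "lk \<equiv> Poly_Mapping.lookup"
abbreviation "kys \<equiv> Poly_Mapping.keys"

lemma expand_pm: "(p::'a \<Rightarrow>\<^sub>0 'k::comm_ring_1) = (\<Sum>m\<in>kys p. sng m (lk p m))"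
  by (rule poly_mapping_eqI) (auto simp: lookup_sum lookup_single when_def in_keys_iff
      intro: sum.neutral)

lemma linext_superset:
  assumes "finite K" "kys p \<subseteq> K"
  shows "linext f p = (\<Sum>m\<in>K. sng (f m) (lk p m))"
  unfolding linext_def
  by (rule sum.mono_neutral_left) (use assms in \<open>auto simp: in_keys_iff\<close>)

lemma linext_add: "linext f (p + q) = linext f p + linext f q"
proof -
  let ?K = "kys p \<union> kys q"
  have "linext f (p+q) = (\<Sum>m\<in>?K. sng (f m) (lk (p+q) m))"
    by (rule linext_superset) (auto simp: Poly_Mapping.keys_add)
  also have "\<dots> = (\<Sum>m\<in>?K. sng (f m) (lk p m)) + (\<Sum>m\<in>?K. sng (f m) (lk q m))"
    by (simp add: lookup_add single_add sum.distrib)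
  also have "\<dots> = linext f p + linext f q"
    using linext_superset[of ?K p f] linext_superset[of ?K q f] by simp
  finally show ?thesis .
qed

lemma linext_zero[simp]: "linext f 0 = 0"
  by (simp add: linext_def)

lemma linext_single[simp]: "linext f (sng m a) = sng (f m) a"
  by (cases "a = 0") (simp_all add: linext_def)

lemma linext_sum: "linext f (sum g I) = (\<Sum>i\<in>I. linext f (g i))"
  by (induction I rule: infinite_finite_induct) (simp_all add: linext_add)

lemma linext_id: "linext id p = p"
  by (subst (2) expand_pm) (simp add: linext_def)

lemma linext_comp: "linext f (linext g p) = linext (f \<circ> g) p"
  by (subst linext_def[of g]) (simp add: linext_sum linext_def[of "f \<circ> g"])

lemma mult_expand:
  "(p::'a::monoid_add \<Rightarrow>\<^sub>0 'k::comm_ring_1) * q =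
     (\<Sum>a\<in>kys p. \<Sum>b\<in>kys q. sng (a+b) (lk p a * lk q b))"
  apply (subst expand_pm[of p], subst expand_pm[of q])
  apply (simp add: sum_product mult_single)
  done

lemma linext_mult:
  fixes h :: "'a::monoid_add \<Rightarrow> 'b::monoid_add"
  assumes h: "\<And>a b. h (a + b) = h a + h b"
  shows "linext h ((p::'a \<Rightarrow>\<^sub>0 'k::comm_ring_1) * q) = linext h p * linext h q"
proof -
  have "linext h (p*q) = (\<Sum>a\<in>kys p. \<Sum>b\<in>kys q. sng (h a + h b) (lk p a * lk q b))"
    by (simp add: mult_expand linext_sum h)
  also have "\<dots> = linext h p * linext h q"
    by (simp add: linext_def sum_product mult_single)
  finally show ?thesis .
qed

lemma linext_one:
  assumes "h 0 = 0"
  shows "linext h (1::'a::monoid_add \<Rightarrow>\<^sub>0 'k::comm_ring_1) = 1"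
  using assms by (simp flip: single_one)

lemma linext_prod_mset:
  fixes h :: "'a::comm_monoid_add \<Rightarrow> 'b::comm_monoid_add"
  assumes h: "\<And>a b. h (a + b) = h a + h b" "h 0 = 0"
  shows "linext h (prod_mset (image_mset (g :: _ \<Rightarrow> 'a \<Rightarrow>\<^sub>0 'k::comm_ring_1) M)) =
         prod_mset (image_mset (\<lambda>x. linext h (g x)) M)"
  by (induction M) (simp_all add: linext_mult[OF h(1)] linext_one[of h, OF h(2)])

lemma Bminus_mon_add[simp]: "Bminus_mon (a + b) = Bminus_mon a + Bminus_mon b"
  by (simp add: Bminus_mon_def)

lemma Bminus_mon_zero[simp]: "Bminus_mon {#} = {#}"
  by (simp add: Bminus_mon_def)

lemma Bminus_mult: "Bminus (p * q) = Bminus p * Bminus q"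
  unfolding Bminus_def by (rule linext_mult) simp

lemma Bminus_one: "Bminus 1 = 1"
  unfolding Bminus_def by (rule linext_one) simp

lemma Bminus_add: "Bminus (p + q) = Bminus p + Bminus q"
  unfolding Bminus_def by (rule linext_add)

lemma B2h_add: "(\<lambda>(m1, m2). (Bminus_mon m1, Bminus_mon m2)) (a + b) =
   (\<lambda>(m1, m2). (Bminus_mon m1, Bminus_mon m2)) a + (\<lambda>(m1, m2). (Bminus_mon m1, Bminus_mon m2)) b"
  by (cases a; cases b) simp

lemma B2h_zero: "(\<lambda>(m1, m2). (Bminus_mon m1, Bminus_mon m2)) 0 = 0"
  by (simp add: zero_prod_def)

lemma Bminus2_prod_mset:
  "Bminus2 (prod_mset (image_mset g M)) = prod_mset (image_mset (\<lambda>x. Bminus2 (g x)) M)"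
  unfolding Bminus2_def by (rule linext_prod_mset[OF B2h_add B2h_zero])

lemma Bminus2_mult: "Bminus2 (p * q) = Bminus2 p * Bminus2 q"
  unfolding Bminus2_def by (rule linext_mult[OF B2h_add])

lemma Bminus2_single0: "Bminus2 (sng 0 a) = sng 0 a"
  by (simp add: Bminus2_def zero_prod_def)



lemma ctree_induct[case_names CNode]:
  assumes "\<And>ps. (\<And>k c. (k, c) \<in> set ps \<Longrightarrow> P c) \<Longrightarrow> P (CNode ps)"
  shows "P c"
  by (induction c rule: ctree.induct) (rule assms, fastforce intro: snds.intros)

lemma sum_list_map_cong: "(\<And>x. x \<in> set xs \<Longrightarrow> f x = g x) \<Longrightarrow> sum_list (map f xs) = sum_list (map g xs)"
  by (metis map_cong)

lemma Bminus_mon_sum_list: "Bminus_mon (sum_list xs) = sum_list (map Bminus_mon xs)"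
  by (induction xs) simp_all

lemma Bminus_mon_single[simp]: "Bminus_mon {#T#} = children T"
  by (simp add: Bminus_mon_def)

lemma Bminus_mon_add_mset[simp]: "Bminus_mon (add_mset T M) = children T + Bminus_mon M"
  by (simp add: Bminus_mon_def)

lemma Bminus_mon_forestNA: "Bminus_mon (forestNA F) = Bminus_mon F"
  unfolding forestNA_def
  by (induction F) (auto simp: Bminus_mon_def)

lemma Bminus_mon_genNA: "Bminus_mon (genNA T) = children T"
  by (simp add: genNA_def)

fun e2v :: "col \<Rightarrow> ctree \<Rightarrow> vtree" where
  "e2v k (CNode ps) = VNode k (map (\<lambda>p. e2v (fst p) (snd p)) ps)"

fun v2e :: "vtree \<Rightarrow> ctree" where
  "v2e (VNode k ds) = CNode (map (\<lambda>d. (vcol d, v2e d)) ds)"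

lemma vcol_e2v[simp]: "vcol (e2v k c) = k"
  by (cases c) simp

lemma vplane_e2v[simp]: "vplane (e2v k c) = cplane c"
  by (induction c arbitrary: k rule: ctree_induct) auto

lemma e2v_v2e[simp]: "e2v (vcol v) (v2e v) = v"
  by (induction v) (auto simp: map_idI)

lemma v2e_e2v[simp]: "v2e (e2v k c) = c"
proof (induction c arbitrary: k rule: ctree_induct)
  case (CNode ps)
  show ?case by (auto intro!: map_idI simp: CNode)
qed

lemma cplane_v2e[simp]: "cplane (v2e v) = vplane v"
  by (induction v) auto

lemma vall2_e2v: "all2 c \<Longrightarrow> vall2 (e2v C2 c)"
  by (induction c rule: ctree_induct) auto

lemma vall2_up: "vall2 v \<Longrightarrow> upclosed v \<and> vcol v = C2"
  by (induction v) (auto)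

lemma up_C2: "upclosed v \<Longrightarrow> vcol v = C2 \<Longrightarrow> vall2 v"
  apply (induction v)
  subgoal for k ds by (cases k) (auto, metis col.exhaust vcol.simps vtree.exhaust)
  done

lemma vvalid_up: "vvalid v = upclosed v"
  unfolding vvalid_def by (metis col.exhaust up_C2 vall2_up)

lemma up_e2v: "evalid c \<Longrightarrow> upclosed (e2v C1 c)"
proof (induction c rule: ctree_induct)
  case (CNode ps)
  show ?case
  proof (clarsimp)
    fix a b assume ab: "(a, b) \<in> set ps"
    show "upclosed (e2v a b)"
    proof (cases a)
      case C1 then show ?thesis using CNode ab by fastforce
    next
      case C2 then show ?thesis using CNode.prems ab by (fastforce dest: vall2_e2v vall2_up)
    qed
  qed
qed

lemma all2_v2e: "vall2 v \<Longrightarrow> all2 (v2e v)"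
  by (induction v) (auto dest: vall2_up)

lemma evalid_v2e: "upclosed v \<Longrightarrow> vcol v = C1 \<Longrightarrow> evalid (v2e v)"
  apply (induction v)
  subgoal for k ds by (auto intro: all2_v2e up_C2)
  done

lemma comp2_e2v: "vcomp2 (e2v k c) = comp2 c"
proof (induction c arbitrary: k rule: ctree_induct)
  case (CNode ps)
  show ?case by (auto simp: comp_def CNode intro!: sum_list_map_cong)
qed

lemma all2_fch: "all2 c \<Longrightarrow> fch c = {#}"
  by (induction c rule: ctree_induct) (auto intro!: sum_list_map_cong[where g="\<lambda>_. {#}", simplified])

lemma all2_qch: "all2 c \<Longrightarrow> qch c = {#}"
  by (induction c rule: ctree_induct) (auto intro!: sum_list_map_cong[where g="\<lambda>_. {#}", simplified])

lemma all2_vforest_True: "all2 c \<Longrightarrow> vforest2 True (e2v C2 c) = {#}"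
  by (induction c rule: ctree_induct) (auto intro!: sum_list_map_cong[where g="\<lambda>_. {#}", simplified])

lemma vforest_C2: "vforest2 False (VNode C2 ds) = {#vcomp2 (VNode C2 ds)#} + vforest2 True (VNode C2 ds)"
  by simp

lemma all2_vforest_False: "all2 c \<Longrightarrow> vforest2 False (e2v C2 c) = {#comp2 c#}"
  using vforest_C2[of "map (\<lambda>p. e2v (fst p) (snd p)) (case c of CNode ps \<Rightarrow> ps)"]
  by (cases c) (metis all2_vforest_True comp2_e2v e2v.simps ctree.case add_0_right)

lemma forest_e2v: "evalid c \<Longrightarrow> children (comp2 c) + Bminus_mon (fch c) = vforest2 False (e2v C1 c)"
proof (induction c rule: ctree_induct)
  case (CNode ps)
  have "children (comp2 (CNode ps)) + Bminus_mon (fch (CNode ps)) =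
    sum_list (map (\<lambda>p. (if fst p = C2 then {#comp2 (snd p)#} else {#}) + Bminus_mon (if fst p = C1 then {#comp2 (snd p)#} + fch (snd p) else fch (snd p))) ps)"
    by (simp add: Bminus_mon_sum_list sum_list_addf comp_def)
  also have "\<dots> = sum_list (map (\<lambda>p. vforest2 False (e2v (fst p) (snd p))) ps)"
  proof (rule sum_list_map_cong)
    fix p assume p: "p \<in> set ps"
    obtain k c where pk: "p = (k, c)" by force
    show "(if fst p = C2 then {#comp2 (snd p)#} else {#}) + Bminus_mon (if fst p = C1 then {#comp2 (snd p)#} + fch (snd p) else fch (snd p)) = vforest2 False (e2v (fst p) (snd p))"
    proof (cases k)
      case C1
      then have "evalid c" using CNode.prems p pk by auto
      then show ?thesis using CNode.IH[of k c] p pk C1 by simp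
    next
      case C2
      then have "all2 c" using CNode.prems p pk by auto
      then show ?thesis using pk C2 by (simp add: all2_fch all2_vforest_False)
    qed
  qed
  also have "\<dots> = vforest2 False (e2v C1 (CNode ps))"
    by (simp add: comp_def)
  finally show ?case .
qed

lemma sub1_e2v: "evalid c \<Longrightarrow> sub1 (e2v C1 c) = Node (qch c)"
proof (induction c rule: ctree_induct)
  case (CNode ps)
  have "sub1 (e2v C1 (CNode ps)) = Node (sum_list (map (\<lambda>p. if fst p = C1 then {#sub1 (e2v C1 (snd p))#} else {#}) ps))"
    by (simp add: comp_def) (rule sum_list_map_cong, auto)
  also have "\<dots> = Node (qch (CNode ps))"
  proof -
    have "sum_list (map (\<lambda>p. if fst p = C1 then {#sub1 (e2v C1 (snd p))#} else {#}) ps) =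
          sum_list (map (\<lambda>p. if fst p = C1 then {#Node (qch (snd p))#} else qch (snd p)) ps)"
    proof (rule sum_list_map_cong)
      fix p assume p: "p \<in> set ps"
      obtain k c where pk: "p = (k, c)" by force
      show "(if fst p = C1 then {#sub1 (e2v C1 (snd p))#} else {#}) = (if fst p = C1 then {#Node (qch (snd p))#} else qch (snd p))"
      proof (cases k)
        case C1
        then have "evalid c" using CNode.prems p pk by auto
        then show ?thesis using CNode.IH[of k c] p pk C1 by simp
      next
        case C2
        then have "all2 c" using CNode.prems p pk by auto
        then show ?thesis using pk C2 by (simp add: all2_qch)
      qed
    qed
    then show ?thesis by simp
  qed
  finally show ?case .
qed



definition V :: "ptree \<Rightarrow> vtree set" where
  "V P = {v. vplane v = P \<and> upclosed v}"
definition V1 :: "ptree \<Rightarrow> vtree set" where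
  "V1 P = {v. vplane v = P \<and> upclosed v \<and> vcol v = C1}"
definition CKP :: "ptree \<Rightarrow> 'k::field palg2" where
  "CKP P = (\<Sum>v\<in>V P. sng (vforest2 False v, vsub1 v) 1)"
definition H :: "ptree \<Rightarrow> 'k::field palg2" where
  "H P = (\<Sum>v\<in>V1 P. sng (vforest2 False v, children (sub1 v)) 1)"
definition LS :: "('b \<Rightarrow> 'a set) \<Rightarrow> 'b list \<Rightarrow> 'a list set" where
  "LS S xs = {ds. list_all2 (\<lambda>d x. d \<in> S x) ds xs}"

lemma LS_Nil[simp]: "LS S [] = {[]}"
  by (auto simp: LS_def)

lemma LS_Cons: "LS S (x # xs) = (\<lambda>(d, ds). d # ds) ` (S x \<times> LS S xs)"
  by (auto simp: LS_def list_all2_Cons2)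

lemma finite_LS: "(\<And>x. x \<in> set xs \<Longrightarrow> finite (S x)) \<Longrightarrow> finite (LS S xs)"
  by (induction xs) (auto simp: LS_Cons)

lemma sum_LS:
  assumes "\<And>x. x \<in> set xs \<Longrightarrow> finite (S x)"
  shows "(\<Sum>ds\<in>LS S xs. prod_list (map f ds)) = prod_list (map (\<lambda>x. \<Sum>d\<in>S x. (f d :: 'c::comm_semiring_1)) xs)"
  using assms
proof (induction xs)
  case Nil then show ?case by simp
next
  case (Cons x xs)
  have inj: "inj_on (\<lambda>(d, ds). d # ds) (S x \<times> LS S xs)"
    by (auto simp: inj_on_def)
  have "(\<Sum>ds\<in>LS S (x#xs). prod_list (map f ds)) = (\<Sum>(d, ds)\<in>S x \<times> LS S xs. f d * prod_list (map f ds))"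
    unfolding LS_Cons by (subst sum.reindex[OF inj]) (simp add: case_prod_unfold)
  also have "\<dots> = (\<Sum>d\<in>S x. f d) * (\<Sum>ds\<in>LS S xs. prod_list (map f ds))"
    by (simp add: sum_product sum.cartesian_product)
  also have "\<dots> = prod_list (map (\<lambda>x. \<Sum>d\<in>S x. f d) (x#xs))"
    using Cons by simp
  finally show ?case .
qed

lemma LS_V_iff: "ds \<in> LS V xs \<longleftrightarrow> map vplane ds = xs \<and> (\<forall>d\<in>set ds. upclosed d)"
  by (induction ds arbitrary: xs) (auto simp: LS_def V_def list_all2_Cons1)

lemma UNIV_col: "(UNIV :: col set) = {C1, C2}"
  by (metis UNIV_eq_I col.exhaust insertCI)

lemma finite_col: "finite (UNIV :: col set)"
  unfolding UNIV_col by simp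

lemma finite_V: "finite (V P)"
proof (induction P)
  case (PNode xs)
  have "V (PNode xs) \<subseteq> (\<lambda>(k, ds). VNode k ds) ` (UNIV \<times> LS V xs)"
  proof
    fix v assume "v \<in> V (PNode xs)"
    then obtain k ds where "v = VNode k ds" "map vplane ds = xs" "\<forall>d\<in>set ds. upclosed d"
      by (cases v) (auto simp: V_def)
    then show "v \<in> (\<lambda>(k, ds). VNode k ds) ` (UNIV \<times> LS V xs)"
      by (auto simp: LS_V_iff)
  qed
  moreover have "finite ((UNIV::col set) \<times> LS V xs)"
    by (intro finite_cartesian_product) (simp_all add: finite_col finite_LS PNode)
  ultimately show ?case by (meson finite_imageI finite_subset)
qed

lemma V1_PNode: "V1 (PNode xs) = VNode C1 ` LS V xs"
proof
  show "V1 (PNode xs) \<subseteq> VNode C1 ` LS V xs"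
  proof
    fix v assume "v \<in> V1 (PNode xs)"
    then obtain ds where "v = VNode C1 ds" "map vplane ds = xs" "\<forall>d\<in>set ds. upclosed d"
      by (cases v) (auto simp: V1_def)
    then show "v \<in> VNode C1 ` LS V xs" by (auto simp: LS_V_iff)
  qed
  show "VNode C1 ` LS V xs \<subseteq> V1 (PNode xs)"
    by (auto simp: LS_V_iff V1_def)
qed

lemma prod_list_single:
  "prod_list (map (\<lambda>d. sng (f d, g d) (1::'k::comm_ring_1)) ds) =
   sng (sum_list (map f ds), sum_list (map g ds)) 1"
  by (induction ds) (simp_all add: mult_single zero_prod_def flip: single_one)

lemma H_PNode: "H (PNode xs) = prod_list (map CKP xs)"
proof -
  have "H (PNode xs) = (\<Sum>ds\<in>LS V xs. sng (vforest2 False (VNode C1 ds), children (sub1 (VNode C1 ds))) 1)"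
    unfolding H_def V1_PNode by (subst sum.reindex) (auto simp: inj_on_def)
  also have "\<dots> = (\<Sum>ds\<in>LS V xs. prod_list (map (\<lambda>d. sng (vforest2 False d, vsub1 d) 1) ds))"
    by (simp add: prod_list_single vsub1_def comp_def)
  also have "\<dots> = prod_list (map CKP xs)"
    by (subst sum_LS) (simp_all add: finite_V CKP_def[abs_def])
  finally show ?thesis .
qed

fun allC2 :: "ptree \<Rightarrow> vtree" where
  "allC2 (PNode xs) = VNode C2 (map allC2 xs)"

lemma allC2_props: "vplane (allC2 P) = P \<and> vall2 (allC2 P)"
  by (induction P) (auto simp: map_idI)

lemma allC2_unique: "vall2 v \<Longrightarrow> v = allC2 (vplane v)"
  by (induction v) (auto simp: map_idI)

lemma vcol_allC2[simp]: "vcol (allC2 P) = C2"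
  by (cases P) simp

lemma allC2_out: "vcomp2 (allC2 P) = ptp P \<and> vforest2 True (allC2 P) = {#}"
proof (induction P)
  case (PNode xs)
  have "sum_list (map (vforest2 True) (map allC2 xs)) = {#}"
    using PNode by (induction xs) auto
  moreover have "map (\<lambda>d. if vcol d = C2 then {#vcomp2 d#} else {#}) (map allC2 xs) = map (\<lambda>x. {#ptp x#}) xs"
    using PNode by (auto)
  ultimately show ?case using PNode by (simp add: comp_def) (auto intro!: image_mset_cong)
qed

lemma V_split: "V P = insert (allC2 P) (V1 P)"
proof
  show "V P \<subseteq> insert (allC2 P) (V1 P)"
  proof
    fix v assume v: "v \<in> V P"
    show "v \<in> insert (allC2 P) (V1 P)"
    proof (cases "vcol v")
      case C1 then show ?thesis using v by (auto simp: V_def V1_def)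
    next
      case C2
      then have "vall2 v" using v up_C2 by (auto simp: V_def)
      then show ?thesis using v allC2_unique by (auto simp: V_def)
    qed
  qed
  show "insert (allC2 P) (V1 P) \<subseteq> V P"
    using allC2_props[of P] vall2_up by (auto simp: V_def V1_def)
qed

lemma allC2_notin: "allC2 P \<notin> V1 P"
  by (simp add: V1_def)

lemma finite_V1: "finite (V1 P)"
  using finite_V[of P] V_split[of P] by simp

definition wrap :: "'k::field palg2 \<Rightarrow> 'k palg2" where
  "wrap = linext (\<lambda>(f, s). (f, {#Node s#}))"

lemma vforest_allC2: "vforest2 False (allC2 P) = {#ptp P#}"
  using vforest_C2[of "map allC2 (case P of PNode xs \<Rightarrow> xs)"] allC2_out[of P]
  by (cases P) simp

lemma CKP_split: "CKP P = sng ({#ptp P#}, {#}) 1 + wrap (H P)"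
proof -
  have "CKP P = sng (vforest2 False (allC2 P), vsub1 (allC2 P)) 1 + (\<Sum>v\<in>V1 P. sng (vforest2 False v, vsub1 v) 1)"
    unfolding CKP_def V_split by (simp add: finite_V1 allC2_notin)
  also have "(\<Sum>v\<in>V1 P. sng (vforest2 False v, vsub1 v) 1) = wrap (H P)"
    unfolding wrap_def H_def linext_sum
    by (rule sum.cong) (auto simp: V1_def vsub1_def)
  finally show ?thesis by (simp add: vforest_allC2 vsub1_def)
qed

primrec G :: "rtree \<Rightarrow> 'k::field palg2" where
  "G (Node M) = sng ({#Node M#}, {#}) 1 + wrap (prod_mset (image_mset G M))"

lemma CKP_G: "(CKP P :: 'k::field palg2) = G (ptp P)"
proof (induction P)
  case (PNode xs)
  have eq: "map (CKP :: _ \<Rightarrow> 'k palg2) xs = map (G \<circ> ptp) xs" using PNode by auto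
  have "prod_mset (image_mset G (mset (map ptp xs))) = prod_list (map (G \<circ> ptp) xs :: 'k palg2 list)"
    by (simp add: prod_mset_prod_list flip: mset_map)
  then have "prod_list (map (CKP :: _ \<Rightarrow> 'k palg2) xs) = prod_mset (image_mset G (mset (map ptp xs)))"
    unfolding eq by simp
  moreover have "(CKP (PNode xs) :: 'k palg2) = sng ({#ptp (PNode xs)#}, {#}) 1 + wrap (prod_list (map CKP xs))"
    by (simp only: CKP_split H_PNode)
  ultimately show ?case by simp
qed

lemma ptp_surj: "\<exists>P. ptp P = T"
proof (induction T)
  case (Node M)
  obtain xs where xs: "mset xs = M" using ex_mset by blast
  define f where "f = (\<lambda>T. SOME P. ptp P = T)"
  have "\<forall>T\<in>set xs. ptp (f T) = T"
  proof
    fix T assume "T \<in> set xs"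
    then have "\<exists>P. ptp P = T" using Node xs by auto
    then show "ptp (f T) = T" unfolding f_def by (rule someI_ex)
  qed
  then have "map (ptp \<circ> f) xs = xs" by (simp add: map_idI)
  then have "ptp (PNode (map f xs)) = Node M" using xs by simp
  then show ?case by blast
qed

lemma ptp_rep: "ptp (rep T) = T"
  unfolding rep_def by (rule someI_ex[OF ptp_surj])

lemma DeltaCK_gen_G: "DeltaCK_gen T = G T"
proof -
  have "DeltaCK_gen T = CKP (rep T)"
    by (simp add: DeltaCK_gen_def CKP_def V_def vvalid_up)
  then show ?thesis by (simp add: CKP_G ptp_rep)
qed



lemma NA_B2: "Bminus2 (DeltaNA_gen T :: 'k::field palg2) = H (rep T)"
proof -
  have "Bminus2 (DeltaNA_gen T :: 'k palg2) =
     (\<Sum>c\<in>{c. cplane c = rep T \<and> evalid c}. sng (Bminus_mon (forestNA (forest2 c)), Bminus_mon (genNA (contr c))) 1)"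
    unfolding DeltaNA_gen_def Bminus2_def linext_sum by simp
  also have "\<dots> = (\<Sum>c\<in>{c. cplane c = rep T \<and> evalid c}. sng (vforest2 False (e2v C1 c), children (sub1 (e2v C1 c))) 1)"
    by (rule sum.cong) (auto simp: Bminus_mon_forestNA Bminus_mon_genNA forest2_def contr_def
        forest_e2v sub1_e2v)
  also have "\<dots> = H (rep T)"
    unfolding H_def
    by (rule sum.reindex_bij_witness[where i=v2e and j="e2v C1"])
       (auto simp: V1_def up_e2v evalid_v2e, metis e2v_v2e)
  finally show ?thesis .
qed

lemma NA_gen_CK: "Bminus2 (DeltaNA_gen T :: 'k::field palg2) = prod_mset (image_mset DeltaCK_gen (children T))"
proof -
  obtain xs where xs: "rep T = PNode xs" by (cases "rep T") auto
  have ch: "children T = mset (map ptp xs)"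
    using ptp_rep[of T] xs by (metis ptp.simps rtree.sel)
  have eq: "map (CKP :: _ \<Rightarrow> 'k palg2) xs = map (G \<circ> ptp) xs" using CKP_G by auto
  have "Bminus2 (DeltaNA_gen T :: 'k::field palg2) = prod_list (map (CKP :: _ \<Rightarrow> 'k palg2) xs)"
    by (simp only: NA_B2 xs H_PNode)
  also have "\<dots> = prod_list (map (G \<circ> ptp) xs)" unfolding eq ..
  also have "\<dots> = prod_mset (image_mset DeltaCK_gen (children T))"
    unfolding ch DeltaCK_gen_G[abs_def] by (simp add: prod_mset_prod_list flip: mset_map)
  finally show ?thesis .
qed

definition LF :: "('a \<Rightarrow> 'b::monoid_add \<Rightarrow>\<^sub>0 'k::comm_ring_1) \<Rightarrow> ('a \<Rightarrow>\<^sub>0 'k) \<Rightarrow> ('b \<Rightarrow>\<^sub>0 'k)" where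
  "LF F p = (\<Sum>m\<in>kys p. sng 0 (lk p m) * F m)"

lemma LF_superset:
  assumes "finite K" "kys p \<subseteq> K"
  shows "LF F p = (\<Sum>m\<in>K. sng 0 (lk p m) * F m)"
  unfolding LF_def
  by (rule sum.mono_neutral_left) (use assms in \<open>auto simp: in_keys_iff\<close>)

lemma LF_add: "LF F (p + q) = LF F p + LF F q"
proof -
  let ?K = "kys p \<union> kys q"
  have "LF F (p+q) = (\<Sum>m\<in>?K. sng 0 (lk (p+q) m) * F m)"
    by (rule LF_superset) (auto simp: Poly_Mapping.keys_add)
  also have "\<dots> = (\<Sum>m\<in>?K. sng 0 (lk p m) * F m) + (\<Sum>m\<in>?K. sng 0 (lk q m) * F m)"
    by (simp add: lookup_add single_add sum.distrib distrib_right)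
  also have "\<dots> = LF F p + LF F q"
    using LF_superset[of ?K p F] LF_superset[of ?K q F] by simp
  finally show ?thesis .
qed

lemma LF_single: "LF F (sng m a) = sng 0 a * F m"
  by (cases "a = 0") (simp_all add: LF_def)

lemma LF_sum: "LF F (sum g I) = (\<Sum>i\<in>I. LF F (g i))"
proof (induction I rule: infinite_finite_induct)
  case (infinite A) then show ?case by (simp add: LF_def)
next
  case empty then show ?case by (simp add: LF_def)
next
  case (insert x F) then show ?case by (simp add: LF_add)
qed

lemma LF_linext: "LF F (linext g p) = (\<Sum>m\<in>kys p. sng 0 (lk p m) * F (g m))"
  unfolding linext_def LF_sum LF_single ..

lemma prod_mset_sum_image:
  "prod_mset (image_mset f (sum_mset (image_mset g M))) = prod_mset (image_mset (\<lambda>T. prod_mset (image_mset f (g T))) M)"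
  by (induction M) simp_all

lemma coalg: "DeltaCK (Bminus p) = Bminus2 (DeltaNA (p :: 'k::field palg))"
proof -
  have "DeltaCK (Bminus p) = (\<Sum>m\<in>kys p. sng 0 (lk p m) * prod_mset (image_mset DeltaCK_gen (Bminus_mon m)))"
    unfolding Bminus_def DeltaCK_def LF_def[symmetric] LF_linext ..
  also have "\<dots> = (\<Sum>m\<in>kys p. Bminus2 (sng 0 (lk p m) * prod_mset (image_mset DeltaNA_gen m)))"
    by (rule sum.cong) (simp_all add: Bminus2_mult Bminus2_single0 Bminus2_prod_mset NA_gen_CK
        Bminus_mon_def prod_mset_sum_image)
  also have "\<dots> = Bminus2 (DeltaNA p)"
    unfolding DeltaNA_def Bminus2_def linext_sum ..
  finally show ?thesis .
qed

lemma children_empty_iff: "children T = {#} \<longleftrightarrow> T = leaf"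
  by (cases T) auto

lemma Bminus_single0: "Bminus (sng 0 a) = sng 0 a"
  by (simp add: Bminus_def)

lemma Bminus_mon_empty_iff: "Bminus_mon m = {#} \<longleftrightarrow> (\<forall>T\<in>#m. T = leaf)"
  unfolding Bminus_mon_def
  by (induction m) (simp_all add: children_empty_iff)

lemma epsilon_B:
  assumes "p \<in> NA"
  shows "epsilon (Bminus p) = epsilon (p :: 'k::field palg)"
proof -
  have "epsilon (Bminus p) = (\<Sum>m\<in>kys p. lk (sng (Bminus_mon m) (lk p m)) {#})"
    unfolding epsilon_def Bminus_def linext_def lookup_sum ..
  also have "\<dots> = (\<Sum>m\<in>kys p. if m = {#} then lk p m else 0)"
  proof (rule sum.cong)
    fix m assume m: "m \<in> kys p"
    then have "leaf \<notin># m" using assms by (auto simp: NA_def)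
    then have "Bminus_mon m = {#} \<longleftrightarrow> m = {#}"
      by (auto simp: Bminus_mon_empty_iff) (metis multiset_nonemptyE)
    then show "lk (sng (Bminus_mon m) (lk p m)) {#} = (if m = {#} then lk p m else 0)"
      by (auto simp: lookup_single when_def)
  qed simp
  also have "\<dots> = lk p {#}"
    by (auto simp: sum.delta in_keys_iff)
  finally show ?thesis unfolding epsilon_def .
qed

definition lift :: "rtree multiset \<Rightarrow> rtree multiset" where
  "lift m = (if m = {#} then {#} else {#Node m#})"

lemma surj_B: "\<exists>p\<in>NA. Bminus p = (q :: 'k::field palg)"
proof
  show "Bminus (linext lift q) = q"
  proof -
    have "Bminus_mon \<circ> lift = id" by (auto simp: lift_def fun_eq_iff)
    then show ?thesis unfolding Bminus_def linext_comp by (simp add: linext_id)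
  qed
  have "kys (linext lift q) \<subseteq> lift ` kys q"
    unfolding linext_def by (rule order_trans[OF Poly_Mapping.keys_sum]) auto
  moreover have "leaf \<notin># lift m" for m by (auto simp: lift_def)
  ultimately show "linext lift q \<in> NA" by (auto simp: NA_def)
qed

theorem mainTheorem12:
  shows
    \<comment> \<open>algebra morphism N_A -> H_CK\<close>
    "(\<forall>p\<in>(NA :: 'k::field palg set). \<forall>q\<in>NA. Bminus (p * q) = Bminus p * Bminus q) \<and>
     Bminus (1 :: 'k palg) = 1 \<and>
     (\<forall>p\<in>(NA :: 'k palg set). \<forall>q\<in>NA. Bminus (p + q) = Bminus p + Bminus q) \<and>
     (\<forall>p\<in>(NA :: 'k palg set). \<forall>a::'k. Bminus (Poly_Mapping.single 0 a * p) = Poly_Mapping.single 0 a * Bminus p) \<and>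
     \<comment> \<open>coalgebra morphism\<close>
     (\<forall>p\<in>(NA :: 'k palg set). DeltaCK (Bminus p) = Bminus2 (DeltaNA p)) \<and>
     (\<forall>p\<in>(NA :: 'k palg set). epsilon (Bminus p) = epsilon p) \<and>
     \<comment> \<open>surjective\<close>
     (\<forall>q :: 'k palg. \<exists>p\<in>NA. Bminus p = q)"
  by (simp add: Bminus_mult Bminus_one Bminus_add coalg epsilon_B surj_B Bminus_single0)


end
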